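(* Every bounded continuous valuation $\nu$ on Johnstone's dcpo $\mathcal J$ (with the Scott topology) is point-continuous. Moreover, there exist a discrete valuation $\theta$ on $\mathcal J$ and a nonnegative real number $r$ such that $\nu=\theta+r\mu$, where $\mu(U)=1$ for every non-empty Scott-open $U\subseteq\mathcal J$ and $\mu(\emptyset)=0$.
   Context: Johnstone's dcpo: $\mathcal J=\mathbb N\times(\mathbb N\cup\{\infty\})$ ordered by $(a,b)\le(c,d)$ iff either ($a=c$ and $b\le d$) or ($d=\infty$ and $b\le c$). A valuation on a space $X$ is a map $\nu:\mathcal OX\to[0,\infty]$ with $\nu(\emptyset)=0$, monotone and modular ($\nu(U)+\nu(V)=\nu(U\cup V)+\nu(U\cap V)$); continuous if it preserves directed suprema of open sets; bounded if $\nu(X)<\infty$. $\delta_x$ is the Dirac valuation at $x$. A discrete valuation is one of the form $\sum_{i=1}^\infty r_i\delta_{x_i}=\sup_n\sum_{i=1}^n r_i\delta_{x_i}$ with $r_i\in[0,\infty)$. A valuation $\nu$ is point-continuous if for every open $U$ and every real $r$ with $0\le r<\nu(U)$ there is a finite subset $A\subseteq U$ such that $\nu(V)>r$ for every open $V\supseteq A$. *)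

theory Defs
  imports "HOL-Analysis.Analysis" "HOL-Library.Extended_Nat" "HOL-Library.Extended_Nonnegative_Real"
begin

type_synonym jpt = "nat \<times> enat"

definition jle :: "jpt \<Rightarrow> jpt \<Rightarrow> bool" where
  "jle p q \<longleftrightarrow> (case p of (a, b) \<Rightarrow> case q of (c, d) \<Rightarrow>
      (a = c \<and> b \<le> d) \<or> (d = \<infinity> \<and> b \<le> enat c))"

definition j_directed :: "jpt set \<Rightarrow> bool" where
  "j_directed D \<longleftrightarrow> D \<noteq> {} \<and> (\<forall>x\<in>D. \<forall>y\<in>D. \<exists>z\<in>D. jle x z \<and> jle y z)"

definition j_is_lub :: "jpt set \<Rightarrow> jpt \<Rightarrow> bool" where
  "j_is_lub D s \<longleftrightarrow> (\<forall>x\<in>D. jle x s) \<and> (\<forall>u. (\<forall>x\<in>D. jle x u) \<longrightarrow> jle s u)"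

definition scott_open :: "jpt set \<Rightarrow> bool" where
  "scott_open U \<longleftrightarrow> (\<forall>x y. x \<in> U \<and> jle x y \<longrightarrow> y \<in> U) \<and>
     (\<forall>D s. j_directed D \<and> j_is_lub D s \<and> s \<in> U \<longrightarrow> D \<inter> U \<noteq> {})"

text \<open>Valuations on the Scott topology (only values on open sets matter).\<close>
definition valuation :: "(jpt set \<Rightarrow> ennreal) \<Rightarrow> bool" where
  "valuation \<nu> \<longleftrightarrow> \<nu> {} = 0 \<and>
     (\<forall>U V. scott_open U \<and> scott_open V \<and> U \<subseteq> V \<longrightarrow> \<nu> U \<le> \<nu> V) \<and>
     (\<forall>U V. scott_open U \<and> scott_open V \<longrightarrow> \<nu> U + \<nu> V = \<nu> (U \<union> V) + \<nu> (U \<inter> V))"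

definition continuous_valuation :: "(jpt set \<Rightarrow> ennreal) \<Rightarrow> bool" where
  "continuous_valuation \<nu> \<longleftrightarrow> valuation \<nu> \<and>
     (\<forall>\<D>. \<D> \<noteq> {} \<and> (\<forall>U\<in>\<D>. scott_open U) \<and>
          (\<forall>U\<in>\<D>. \<forall>V\<in>\<D>. \<exists>W\<in>\<D>. U \<subseteq> W \<and> V \<subseteq> W)
        \<longrightarrow> \<nu> (\<Union>\<D>) = (SUP U\<in>\<D>. \<nu> U))"

definition bounded_valuation :: "(jpt set \<Rightarrow> ennreal) \<Rightarrow> bool" where
  "bounded_valuation \<nu> \<longleftrightarrow> \<nu> UNIV < \<infinity>"

definition point_continuous :: "(jpt set \<Rightarrow> ennreal) \<Rightarrow> bool" where
  "point_continuous \<nu> \<longleftrightarrow> (\<forall>U r. scott_open U \<and> 0 \<le> r \<and> ennreal r < \<nu> U \<longrightarrow>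
     (\<exists>A. finite A \<and> A \<subseteq> U \<and> (\<forall>V. scott_open V \<and> A \<subseteq> V \<longrightarrow> \<nu> V > ennreal r)))"

definition dirac :: "jpt \<Rightarrow> jpt set \<Rightarrow> ennreal" where
  "dirac x U = (if x \<in> U then 1 else 0)"

definition discrete_valuation :: "(jpt set \<Rightarrow> ennreal) \<Rightarrow> bool" where
  "discrete_valuation \<theta> \<longleftrightarrow> (\<exists>(r::nat \<Rightarrow> real) (x::nat \<Rightarrow> jpt). (\<forall>i. 0 \<le> r i) \<and>
     (\<forall>U. \<theta> U = (\<Sum>i. ennreal (r i) * dirac (x i) U)))"

definition mu_J :: "jpt set \<Rightarrow> ennreal" where
  "mu_J U = (if U = {} then 0 else 1)"

end

theory Submission
  imports Defs
begin

definition jop :: "jpt set \<Rightarrow> bool" where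
 "jop X \<longleftrightarrow> (\<forall>a b d. (a,b) \<in> X \<and> b \<le> d \<longrightarrow> (a,d) \<in> X) \<and>
   (\<forall>a b c. (a,b) \<in> X \<and> b \<le> enat c \<longrightarrow> (c,\<infinity>) \<in> X) \<and>
   (\<forall>c. (c,\<infinity>) \<in> X \<longrightarrow> (\<exists>m. (c, enat m) \<in> X))"

lemma jle_simp: "jle (a,b) (c,d) \<longleftrightarrow> (a = c \<and> b \<le> d) \<or> (d = \<infinity> \<and> b \<le> enat c)"
  by (simp add: jle_def)

lemma scott_open_jop: assumes "scott_open X" shows "jop X"
proof -
  have up: "\<And>x y. x \<in> X \<Longrightarrow> jle x y \<Longrightarrow> y \<in> X" using assms by (auto simp: scott_open_def)
  have col: "\<exists>m. (c, enat m) \<in> X" if "(c,\<infinity>) \<in> X" for c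
  proof -
    let ?D = "{(c, enat k) | k. True}"
    have dir: "j_directed ?D"
      unfolding j_directed_def
      by (auto simp: jle_simp) (metis linorder_le_cases)
    have lub: "j_is_lub ?D (c,\<infinity>)"
      unfolding j_is_lub_def
    proof (intro conjI allI impI)
      show "\<forall>x\<in>?D. jle x (c, \<infinity>)" by (auto simp: jle_simp)
      fix u assume h: "\<forall>x\<in>?D. jle x u"
      obtain a d where u: "u = (a,d)" by (cases u)
      show "jle (c, \<infinity>) u"
      proof (cases "a = c")
        case True
        have "\<forall>k. enat k \<le> d" using h u True by (auto simp: jle_simp)
        then have "d = \<infinity>" by (metis enat_ord_simps(2) lessI not_le enat.exhaust)
        then show ?thesis using u True by (simp add: jle_simp)
      next
        case False
        have "jle (c, enat (Suc a)) u" using h by auto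
        then show ?thesis using u False by (auto simp: jle_simp)
      qed
    qed
    have "j_directed ?D \<and> j_is_lub ?D (c,\<infinity>) \<and> (c,\<infinity>) \<in> X \<longrightarrow> ?D \<inter> X \<noteq> {}"
      using assms unfolding scott_open_def by blast
    with dir lub that have "?D \<inter> X \<noteq> {}" by blast
    then show ?thesis by auto
  qed
  show ?thesis unfolding jop_def
    using up col by (auto simp: jle_simp)
qed

lemma jle_antisym: "jle x y \<Longrightarrow> jle y x \<Longrightarrow> x = y"
  by (cases x; cases y) (auto simp: jle_simp)

lemma jop_scott_open: assumes "jop X" shows "scott_open X"
  unfolding scott_open_def
proof (intro conjI allI impI)
  fix x y assume "x \<in> X \<and> jle x y"
  then show "y \<in> X" using assms by (cases x; cases y) (auto simp: jop_def jle_simp)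
next
  fix D s assume h: "j_directed D \<and> j_is_lub D s \<and> s \<in> X"
  then have dir: "D \<noteq> {}" "\<And>x y. x \<in> D \<Longrightarrow> y \<in> D \<Longrightarrow> \<exists>z\<in>D. jle x z \<and> jle y z"
    and ub: "\<And>x. x \<in> D \<Longrightarrow> jle x s" and least: "\<And>u. (\<forall>x\<in>D. jle x u) \<Longrightarrow> jle s u"
    and sX: "s \<in> X"
    by (auto simp: j_directed_def j_is_lub_def)
  obtain c e where s: "s = (c,e)" by (cases s)
  show "D \<inter> X \<noteq> {}"
  proof (cases e)
    case (enat m)
    have Dsub: "D \<subseteq> {(c, enat k) | k. k \<le> m}"
    proof
      fix x assume "x \<in> D"
      with ub s enat show "x \<in> {(c, enat k) | k. k \<le> m}"
        apply (cases x) apply (auto simp: jle_simp)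
        by (metis enat_ile enat_ord_simps(1))
    qed
    let ?K = "{k. (c, enat k) \<in> D}"
    have finK: "finite ?K" using Dsub by (auto intro: finite_subset[of _ "{..m}"])
    have neK: "?K \<noteq> {}" using Dsub dir(1) by auto
    define k0 where "k0 = Max ?K"
    have k0K: "k0 \<in> ?K" unfolding k0_def using finK neK by (rule Max_in)
    have "\<forall>x\<in>D. jle x (c, enat k0)"
    proof
      fix x assume "x \<in> D"
      then obtain k where "x = (c, enat k)" "k \<in> ?K" using Dsub by auto
      then show "jle x (c, enat k0)" using finK k0_def by (auto simp: jle_simp)
    qed
    then have "jle s (c, enat k0)" by (rule least)
    moreover have "jle (c, enat k0) s" using ub k0K by auto
    ultimately have "s = (c, enat k0)" by (rule jle_antisym)
    then show ?thesis using k0K sX by auto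
  next
    case infinity
    show ?thesis
    proof (cases "s \<in> D")
      case True then show ?thesis using sX by auto
    next
      case False
      have fin: "\<And>x. x \<in> D \<Longrightarrow> snd x \<noteq> \<infinity>"
      proof -
        fix x assume xD: "x \<in> D"
        show "snd x \<noteq> \<infinity>"
        proof
          assume "snd x = \<infinity>"
          then have "x = s" using ub[OF xD] s infinity by (cases x) (auto simp: jle_simp)
          then show False using False xD by auto
        qed
      qed
      obtain x0 where x0: "x0 \<in> D" using dir(1) by auto
      obtain a where a: "fst x0 = a" by auto
      have colD: "\<And>y. y \<in> D \<Longrightarrow> fst y = a"
      proof -
        fix y assume yD: "y \<in> D"
        obtain z where z: "z \<in> D" "jle x0 z" "jle y z" using dir(2)[OF x0 yD] by auto
        have "snd z \<noteq> \<infinity>" using fin z(1) by auto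
        then show "fst y = a" using z a by (cases y; cases z; cases x0) (auto simp: jle_simp)
      qed
      have "a = c"
      proof (rule ccontr)
        assume "a \<noteq> c"
        have "\<forall>x\<in>D. jle x (a, \<infinity>)" using colD by (auto simp: jle_simp)
        then have "jle s (a, \<infinity>)" by (rule least)
        then show False using s infinity \<open>a \<noteq> c\<close> by (auto simp: jle_simp)
      qed
      obtain m where m: "(c, enat m) \<in> X" using assms sX s infinity by (auto simp: jop_def)
      have "\<exists>y\<in>D. enat m \<le> snd y"
      proof (rule ccontr)
        assume "\<not> ?thesis"
        then have "\<forall>x\<in>D. jle x (c, enat m)" using colD \<open>a = c\<close>
          by (auto simp: jle_simp)
        then have "jle s (c, enat m)" by (rule least)
        then show False using s infinity by (auto simp: jle_simp)
      qed
      then obtain y where "y \<in> D" "enat m \<le> snd y" by auto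
      moreover then have "y = (c, snd y)" using colD \<open>a = c\<close> by (cases y) auto
      ultimately have "y \<in> X" using m assms unfolding jop_def by metis
      then show ?thesis using \<open>y \<in> D\<close> by auto
    qed
  qed
qed

lemma scott_open_iff: "scott_open X \<longleftrightarrow> jop X"
  using scott_open_jop jop_scott_open by blast


lemma jop_up: "jop U \<Longrightarrow> (a,b) \<in> U \<Longrightarrow> b \<le> d \<Longrightarrow> (a,d) \<in> U"
  unfolding jop_def by blast
lemma jop_max: "jop U \<Longrightarrow> (a,b) \<in> U \<Longrightarrow> b \<le> enat c \<Longrightarrow> (c,\<infinity>) \<in> U"
  unfolding jop_def by blast
lemma jop_col: "jop U \<Longrightarrow> (c,\<infinity>) \<in> U \<Longrightarrow> \<exists>m. (c, enat m) \<in> U"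
  unfolding jop_def by blast
lemma jopI: "(\<And>a b d. (a,b) \<in> U \<Longrightarrow> b \<le> d \<Longrightarrow> (a,d) \<in> U) \<Longrightarrow>
   (\<And>a b c. (a,b) \<in> U \<Longrightarrow> b \<le> enat c \<Longrightarrow> (c,\<infinity>) \<in> U) \<Longrightarrow>
   (\<And>c. (c,\<infinity>) \<in> U \<Longrightarrow> \<exists>m. (c, enat m) \<in> U) \<Longrightarrow> jop U"
  unfolding jop_def by blast

lemma jop_Int: assumes u: "jop U" and v: "jop V" shows "jop (U \<inter> V)"
proof (rule jopI)
  fix a b d assume "(a,b) \<in> U \<inter> V" "b \<le> d"
  then show "(a,d) \<in> U \<inter> V" using jop_up[OF u] jop_up[OF v] by blast
next
  fix a b c assume "(a,b) \<in> U \<inter> V" "b \<le> enat c"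
  then show "(c,\<infinity>) \<in> U \<inter> V" using jop_max[OF u] jop_max[OF v] by blast
next
  fix c assume "(c,\<infinity>) \<in> U \<inter> V"
  then obtain m1 m2 where "(c, enat m1) \<in> U" "(c, enat m2) \<in> V" using jop_col[OF u] jop_col[OF v] by blast
  then have "(c, enat (max m1 m2)) \<in> U \<inter> V" using jop_up[OF u] jop_up[OF v]
    by (metis IntI enat_ord_simps(1) max.cobounded1 max.cobounded2)
  then show "\<exists>m. (c, enat m) \<in> U \<inter> V" by blast
qed

lemma jop_Un: assumes u: "jop U" and v: "jop V" shows "jop (U \<union> V)"
proof (rule jopI)
  fix a b d assume "(a,b) \<in> U \<union> V" "b \<le> d"
  then show "(a,d) \<in> U \<union> V" using jop_up[OF u] jop_up[OF v] by blast
next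
  fix a b c assume "(a,b) \<in> U \<union> V" "b \<le> enat c"
  then show "(c,\<infinity>) \<in> U \<union> V" using jop_max[OF u] jop_max[OF v] by blast
next
  fix c assume "(c,\<infinity>) \<in> U \<union> V"
  then show "\<exists>m. (c, enat m) \<in> U \<union> V" using jop_col[OF u] jop_col[OF v] by blast
qed

lemma jop_UNIV: "jop UNIV" by (rule jopI) auto
lemma jop_empty: "jop {}" by (rule jopI) auto

definition P :: "nat \<Rightarrow> nat \<Rightarrow> jpt set" where
  "P a n = {(c,d). c \<noteq> a \<or> enat n \<le> d}"

lemma jop_P: "jop (P a n)"
proof (rule jopI)
  fix c b d assume "(c,b) \<in> P a n" "b \<le> d"
  then show "(c,d) \<in> P a n" by (auto simp: P_def)
next
  fix c b e assume "(c,b) \<in> P a n" "b \<le> enat e"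
  then show "(e,\<infinity>) \<in> P a n" by (auto simp: P_def)
next
  fix c assume "(c,\<infinity>) \<in> P a n"
  then show "\<exists>m. (c, enat m) \<in> P a n" by (cases "c = a") (auto simp: P_def)
qed


context
  fixes \<nu> :: "jpt set \<Rightarrow> ennreal"
  assumes cv: "continuous_valuation \<nu>" and bd: "bounded_valuation \<nu>"
begin

lemma nu_empty: "\<nu> {} = 0" using cv by (simp add: continuous_valuation_def valuation_def)

lemma nu_mono: "jop U \<Longrightarrow> jop V \<Longrightarrow> U \<subseteq> V \<Longrightarrow> \<nu> U \<le> \<nu> V"
  using cv by (simp add: continuous_valuation_def valuation_def scott_open_iff)

lemma nu_mod: "jop U \<Longrightarrow> jop V \<Longrightarrow> \<nu> U + \<nu> V = \<nu> (U \<union> V) + \<nu> (U \<inter> V)"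
  using cv by (simp add: continuous_valuation_def valuation_def scott_open_iff)

lemma nu_fin: "jop U \<Longrightarrow> \<nu> U < \<infinity>"
  using nu_mono[OF _ jop_UNIV, of U] bd by (auto simp: bounded_valuation_def)

definition nr :: "jpt set \<Rightarrow> real" where "nr U = enn2real (\<nu> U)"

lemma nu_nr: "jop U \<Longrightarrow> \<nu> U = ennreal (nr U)"
  using nu_fin[of U] by (simp add: nr_def ennreal_enn2real_if)

lemma nr_nonneg: "nr U \<ge> 0" by (simp add: nr_def)

lemma nr_mono: "jop U \<Longrightarrow> jop V \<Longrightarrow> U \<subseteq> V \<Longrightarrow> nr U \<le> nr V"
  using nu_mono[of U V] nu_fin[of V] unfolding nr_def by (simp add: enn2real_mono)

lemma nr_mod: "jop U \<Longrightarrow> jop V \<Longrightarrow> nr U + nr V = nr (U \<union> V) + nr (U \<inter> V)"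
proof -
  assume u: "jop U" and v: "jop V"
  have "enn2real (\<nu> U + \<nu> V) = enn2real (\<nu> (U \<union> V) + \<nu> (U \<inter> V))"
    using nu_mod[OF u v] by simp
  then show ?thesis unfolding nr_def
    using nu_fin[OF u] nu_fin[OF v] nu_fin[OF jop_Un[OF u v]] nu_fin[OF jop_Int[OF u v]]
    by (simp add: enn2real_plus)
qed

lemma enat_Suc_le: "enat (Suc n) \<le> d \<longleftrightarrow> enat n \<le> d \<and> d \<noteq> enat n"
  by (cases d) auto

lemma P_Suc_sub: "P a (Suc n) \<subseteq> P a n"
  by (auto simp: P_def enat_Suc_le)

definition wf :: "nat \<Rightarrow> nat \<Rightarrow> real" where
  "wf a n = nr (P a n) - nr (P a (Suc n))"

lemma wf_nonneg: "wf a n \<ge> 0"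
  unfolding wf_def using nr_mono[OF jop_P jop_P P_Suc_sub, of a n] by simp

lemma remove_min:
  assumes U: "jop U" and x: "(a, enat n) \<in> U" and mn: "\<forall>k<n. (a, enat k) \<notin> U"
  shows "jop (U - {(a, enat n)})" "nr U = nr (U - {(a, enat n)}) + wf a n"
proof -
  show U': "jop (U - {(a, enat n)})"
  proof (rule jopI)
    fix c b d assume h: "(c,b) \<in> U - {(a, enat n)}" "b \<le> d"
    then have "(c,d) \<in> U" using jop_up[OF U] by blast
    moreover have "(c,d) \<noteq> (a, enat n)"
    proof
      assume "(c,d) = (a, enat n)"
      with h have "b < enat n" by auto
      then obtain k where "b = enat k" "k < n" by (cases b) auto
      with h mn \<open>(c,d) = (a, enat n)\<close> show False by auto
    qed
    ultimately show "(c,d) \<in> U - {(a, enat n)}" by auto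
  next
    fix c b e assume "(c,b) \<in> U - {(a, enat n)}" "b \<le> enat e"
    then show "(e,\<infinity>) \<in> U - {(a, enat n)}" using jop_max[OF U] by blast
  next
    fix c assume "(c,\<infinity>) \<in> U - {(a, enat n)}"
    then obtain m where m: "(c, enat m) \<in> U" using jop_col[OF U] by blast
    then have "(c, enat (Suc m)) \<in> U" using jop_up[OF U] by (metis enat_ord_simps(1) le_SucI order_refl)
    with m show "\<exists>m. (c, enat m) \<in> U - {(a, enat n)}"
      by (cases "(c, enat m) = (a, enat n)") auto
  qed
  define W where "W = U \<inter> P a n"
  have W: "jop W" unfolding W_def by (rule jop_Int[OF U jop_P])
  have e1: "(U - {(a, enat n)}) \<union> W = U" using x by (auto simp: W_def P_def)
  have e2: "(U - {(a, enat n)}) \<inter> W = U \<inter> P a (Suc n)"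
    by (auto simp: W_def P_def enat_Suc_le)
  have e3: "P a (Suc n) \<union> W = P a n"
    using x by (auto simp: W_def P_def enat_Suc_le)
  have e4: "P a (Suc n) \<inter> W = U \<inter> P a (Suc n)"
    by (auto simp: W_def P_def enat_Suc_le)
  have "nr (U - {(a, enat n)}) + nr W = nr U + nr (U \<inter> P a (Suc n))"
    using nr_mod[OF U' W] e1 e2 by simp
  moreover have "nr (P a (Suc n)) + nr W = nr (P a n) + nr (U \<inter> P a (Suc n))"
    using nr_mod[OF jop_P W] e3 e4 by simp
  ultimately show "nr U = nr (U - {(a, enat n)}) + wf a n" unfolding wf_def by linarith
qed

definition wfp :: "jpt \<Rightarrow> real" where
  "wfp x = wf (fst x) (the_enat (snd x))"

lemma wfp_nonneg: "wfp x \<ge> 0" by (simp add: wfp_def wf_nonneg)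

lemma step1:
  assumes "jop U" "jop V" "V \<subseteq> U" "finite (U - V)" "\<forall>x\<in>U - V. snd x \<noteq> \<infinity>"
  shows "nr U = nr V + (\<Sum>x\<in>U - V. wfp x)"
  using assms
proof (induction "card (U - V)" arbitrary: U rule: less_induct)
  case less
  show ?case
  proof (cases "U - V = {}")
    case True
    then have "U = V" using less.prems by auto
    then show ?thesis by simp
  next
    case False
    then obtain y where y: "y \<in> U - V" by auto
    then obtain a0 k0 where "y = (a0, enat k0)" using less.prems(5)
      by (metis enat.exhaust prod.collapse)
    then have ex: "\<exists>n a. (a, enat n) \<in> U - V" using y by auto
    define n where "n = (LEAST n. \<exists>a. (a, enat n) \<in> U - V)"
    obtain a where x: "(a, enat n) \<in> U - V" using LeastI_ex[OF ex] unfolding n_def by blast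
    have mn: "\<forall>k<n. (a, enat k) \<notin> U"
    proof (intro allI impI notI)
      fix k assume k: "k < n" "(a, enat k) \<in> U"
      have "(a, enat k) \<notin> U - V" using not_less_Least[OF k(1)[unfolded n_def]] by blast
      then have "(a, enat k) \<in> V" using k by auto
      then have "(a, enat n) \<in> V" using jop_up[OF less.prems(2)] k(1) by (simp add: order_less_imp_le)
      then show False using x by auto
    qed
    have xU: "(a, enat n) \<in> U" using x by auto
    note rm = remove_min[OF less.prems(1) xU mn]
    let ?U' = "U - {(a, enat n)}"
    have eq: "?U' - V = (U - V) - {(a, enat n)}" by auto
    have lt: "card (?U' - V) < card (U - V)"
      unfolding eq using x less.prems(4) by (meson card_Diff1_less)
    have IH: "nr ?U' = nr V + (\<Sum>x\<in>?U' - V. wfp x)"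
      apply (rule less.hyps[OF lt rm(1) less.prems(2)])
      using less.prems x eq by auto
    have "(\<Sum>x\<in>U - V. wfp x) = wfp (a, enat n) + (\<Sum>x\<in>(U - V) - {(a, enat n)}. wfp x)"
      using x less.prems(4) by (simp add: sum.remove)
    then show ?thesis using rm(2) IH eq by (simp add: wfp_def)
  qed
qed

definition Va :: "nat \<Rightarrow> jpt set" where
  "Va a = {(c,d). c \<noteq> a \<and> enat a < d}"
definition ctail :: "nat \<Rightarrow> nat \<Rightarrow> jpt set" where
  "ctail a n = {(c,d). c = a \<and> enat n \<le> d}"
definition Y :: "nat \<Rightarrow> nat \<Rightarrow> jpt set" where
  "Y a m = Va a \<union> ctail a m"

lemma jop_Va: "jop (Va a)"
proof (rule jopI)
  fix c b d assume "(c,b) \<in> Va a" "b \<le> d"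
  then show "(c,d) \<in> Va a" by (auto simp: Va_def)
next
  fix c b e assume h: "(c,b) \<in> Va a" "b \<le> enat e"
  then have "enat a < b" by (auto simp: Va_def)
  then have "enat a < enat e" using h(2) by (rule less_le_trans)
  then show "(e,\<infinity>) \<in> Va a" by (auto simp: Va_def)
next
  fix c assume "(c,\<infinity>) \<in> Va a"
  then have "(c, enat (Suc a)) \<in> Va a" by (auto simp: Va_def)
  then show "\<exists>m. (c, enat m) \<in> Va a" by blast
qed

lemma jop_V_ctail:
  assumes V: "jop V" and na: "\<And>d. (a,d) \<notin> V" and am: "a < m"
    and maxV: "\<And>e. e \<ge> m \<Longrightarrow> e \<noteq> a \<Longrightarrow> (e,\<infinity>) \<in> V"
  shows "jop (V \<union> ctail a m)"
proof (rule jopI)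
  fix c b d assume "(c,b) \<in> V \<union> ctail a m" "b \<le> d"
  then show "(c,d) \<in> V \<union> ctail a m" using jop_up[OF V] by (auto simp: ctail_def)
next
  fix c b e assume h: "(c,b) \<in> V \<union> ctail a m" "b \<le> enat e"
  show "(e,\<infinity>) \<in> V \<union> ctail a m"
  proof (cases "(c,b) \<in> V")
    case True then show ?thesis using jop_max[OF V] h by blast
  next
    case False
    then have "c = a" "enat m \<le> b" using h by (auto simp: ctail_def)
    then have "m \<le> e" using h(2) by (metis enat_ord_simps(1) order_trans)
    then show ?thesis using maxV by (cases "e = a") (auto simp: ctail_def)
  qed
next
  fix c assume "(c,\<infinity>) \<in> V \<union> ctail a m"
  then show "\<exists>k. (c, enat k) \<in> V \<union> ctail a m" using jop_col[OF V]
    by (auto simp: ctail_def)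
qed

lemma jop_Y: assumes "a < m" shows "jop (Y a m)"
proof -
  have "jop (Va a \<union> ctail a m)"
  proof (rule jop_V_ctail[OF jop_Va])
    show "\<And>d. (a, d) \<notin> Va a" by (auto simp: Va_def)
    show "a < m" by fact
    show "\<And>e. m \<le> e \<Longrightarrow> e \<noteq> a \<Longrightarrow> (e, \<infinity>) \<in> Va a" by (auto simp: Va_def)
  qed
  then show ?thesis by (simp add: Y_def)
qed

definition g :: "nat \<Rightarrow> nat \<Rightarrow> real" where
  "g a m = nr (Y a m) - nr (Va a)"

lemma g_conv: "\<exists>L. (\<lambda>m. g a (m + Suc a)) \<longlonglongrightarrow> L \<and> L \<ge> 0"
proof -
  have dec: "decseq (\<lambda>m. g a (m + Suc a))"
  proof (rule decseq_SucI)
    fix m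
    have "Y a (Suc m + Suc a) \<subseteq> Y a (m + Suc a)"
      by (auto simp: Y_def ctail_def) (metis Suc_ile_eq order_less_imp_le)
    then show "g a (Suc m + Suc a) \<le> g a (m + Suc a)"
      using nr_mono[OF jop_Y jop_Y] unfolding g_def by simp
  qed
  have lb: "\<forall>i. 0 \<le> g a (i + Suc a)"
    using nr_mono[OF jop_Va jop_Y] unfolding g_def by (simp add: Y_def)
  from decseq_convergent[OF dec lb] obtain L where "(\<lambda>m. g a (m + Suc a)) \<longlonglongrightarrow> L" "\<forall>i. L \<le> g a (i + Suc a)"
    by blast
  moreover have "L \<ge> 0"
    using LIMSEQ_le_const[OF calculation(1)] lb by auto
  ultimately show ?thesis by blast
qed

definition wmax :: "nat \<Rightarrow> real" where
  "wmax a = lim (\<lambda>m. g a (m + Suc a))"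

lemma wmax: "(\<lambda>m. g a m) \<longlonglongrightarrow> wmax a" "wmax a \<ge> 0"
proof -
  obtain L where L: "(\<lambda>m. g a (m + Suc a)) \<longlonglongrightarrow> L" "L \<ge> 0" using g_conv by blast
  then have w: "wmax a = L" unfolding wmax_def by (simp add: limI)
  have "(\<lambda>m. g a (m + Suc a)) \<longlonglongrightarrow> wmax a" using L w by simp
  from LIMSEQ_offset[OF this] show "(\<lambda>m. g a m) \<longlonglongrightarrow> wmax a" .
  show "wmax a \<ge> 0" using L w by simp
qed

definition wr :: "jpt \<Rightarrow> real" where
  "wr x = (case snd x of enat n \<Rightarrow> wf (fst x) n | \<infinity> \<Rightarrow> wmax (fst x))"

lemma wr_nonneg: "wr x \<ge> 0"
  by (cases "snd x") (auto simp: wr_def wf_nonneg wmax)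

lemma wr_fin: "wr (a, enat n) = wf a n" by (simp add: wr_def)
lemma wr_inf: "wr (a, \<infinity>) = wmax a" by (simp add: wr_def)

definition Mth :: "jpt measure" where
  "Mth = density (count_space UNIV) (\<lambda>x. ennreal (wr x))"

definition th :: "jpt set \<Rightarrow> ennreal" where
  "th S = emeasure Mth S"

lemma sets_Mth[simp]: "sets Mth = UNIV" by (simp add: Mth_def)

lemma th_nn: "th S = (\<integral>\<^sup>+x. ennreal (wr x) * indicator S x \<partial>count_space UNIV)"
  unfolding th_def Mth_def by (simp add: emeasure_density)

lemma th_fin: "finite S \<Longrightarrow> th S = (\<Sum>x\<in>S. ennreal (wr x))"
  unfolding th_nn
  by (subst nn_integral_indicator_finite) auto

lemma th_un: "A \<inter> B = {} \<Longrightarrow> th (A \<union> B) = th A + th B"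
  unfolding th_def by (simp add: plus_emeasure)

lemma th_mono: "A \<subseteq> B \<Longrightarrow> th A \<le> th B"
  unfolding th_def by (simp add: emeasure_mono)

lemma th_sup: "incseq A \<Longrightarrow> th (\<Union>i. A i) = (SUP i. th (A i))"
  unfolding th_def by (simp add: SUP_emeasure_incseq)

lemma th_empty: "th {} = 0" unfolding th_def by simp

lemma enat_le_fin: "enat n \<le> b \<Longrightarrow> b \<noteq> \<infinity> \<Longrightarrow> \<exists>k. b = enat k \<and> n \<le> k"
  by (cases b) auto

lemma tail_lemma:
  assumes V: "jop V" and na: "\<And>d. (a,d) \<notin> V" and an: "a < n" and Z: "jop (V \<union> ctail a n)"
  shows "\<nu> (V \<union> ctail a n) = \<nu> V + th (ctail a n)"
proof -
  let ?Z = "V \<union> ctail a n"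
  have maxV: "(e,\<infinity>) \<in> V" if "e \<ge> n" "e \<noteq> a" for e
  proof -
    have "(a, enat n) \<in> ?Z" by (simp add: ctail_def)
    then have "(e,\<infinity>) \<in> ?Z" using jop_max[OF Z] that by simp
    then show ?thesis using that by (auto simp: ctail_def)
  qed
  define D where "D = nr ?Z - nr V"
  define s where "s m = (\<Sum>k\<in>{n..<m}. wf a k)" for m
  have key: "g a m = D - s m" if m: "m \<ge> n" for m
  proof -
    let ?Zm = "V \<union> ctail a m"
    have Zm: "jop ?Zm"
      by (rule jop_V_ctail[OF V na]) (use m an maxV in auto)
    have sub: "?Zm \<subseteq> ?Z" using m by (auto simp: ctail_def) (metis enat_ord_simps(1) order_trans)
    have diff: "?Z - ?Zm = (\<lambda>k. (a, enat k)) ` {n..<m}"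
    proof (rule set_eqI)
      fix x :: jpt
      obtain c d where x: "x = (c,d)" by (cases x)
      show "x \<in> ?Z - ?Zm \<longleftrightarrow> x \<in> (\<lambda>k. (a, enat k)) ` {n..<m}"
        unfolding x using na by (cases d) (auto simp: ctail_def)
    qed
    have s1: "nr ?Z = nr ?Zm + (\<Sum>x\<in>?Z - ?Zm. wfp x)"
      by (rule step1[OF Z Zm sub]) (auto simp: diff)
    have "(\<Sum>x\<in>?Z - ?Zm. wfp x) = s m"
      unfolding diff s_def by (subst sum.reindex) (auto simp: inj_on_def wfp_def)
    with s1 have A: "nr ?Z = nr ?Zm + s m" by simp
    have am: "a < m" using an m by simp
    let ?I = "(V \<inter> Va a) \<union> ctail a m"
    have i0: "?Zm \<inter> Y a m = ?I" using na by (auto simp: Y_def ctail_def Va_def)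
    have I: "jop ?I" using jop_Int[OF Zm jop_Y[OF am]] unfolding i0 .
    have i1: "V \<union> ?I = ?Zm" by auto
    have i2: "V \<inter> ?I = V \<inter> Va a" using na by (auto simp: ctail_def)
    have i3: "Va a \<union> ?I = Y a m" by (auto simp: Y_def)
    have i4: "Va a \<inter> ?I = V \<inter> Va a" by (auto simp: ctail_def Va_def)
    have "nr V + nr ?I = nr ?Zm + nr (V \<inter> Va a)" using nr_mod[OF V I] i1 i2 by simp
    moreover have "nr (Va a) + nr ?I = nr (Y a m) + nr (V \<inter> Va a)" using nr_mod[OF jop_Va I] i3 i4 by simp
    ultimately show ?thesis using A unfolding g_def D_def by linarith
  qed
  have slim: "s \<longlonglongrightarrow> D - wmax a"
  proof -
    have "(\<lambda>m. D - g a m) \<longlonglongrightarrow> D - wmax a" by (intro tendsto_intros wmax(1))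
    moreover have "\<forall>\<^sub>F m in sequentially. D - g a m = s m"
      using key by (auto simp: eventually_sequentially intro!: exI[of _ n])
    ultimately show ?thesis by (rule Lim_transform_eventually)
  qed
  have s_nonneg: "s m \<ge> 0" for m unfolding s_def by (simp add: sum_nonneg wf_nonneg)
  have Dw: "0 \<le> D - wmax a" by (rule LIMSEQ_le_const[OF slim]) (use s_nonneg in auto)
  define F where "F m = (\<lambda>k. (a, enat k)) ` {n..<m}" for m
  have incF: "incseq F" unfolding F_def incseq_def by auto
  have UF: "(\<Union>m. F m) = {(a, enat k) | k. n \<le> k}"
    unfolding F_def by auto (metis atLeastLessThan_iff lessI image_eqI)
  have thF: "th (F m) = ennreal (s m)" for m
  proof -
    have "th (F m) = (\<Sum>x\<in>F m. ennreal (wr x))" by (simp add: th_fin F_def)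
    also have "\<dots> = (\<Sum>k\<in>{n..<m}. ennreal (wf a k))"
      unfolding F_def by (subst sum.reindex) (auto simp: inj_on_def wr_fin)
    also have "\<dots> = ennreal (s m)" unfolding s_def by (simp add: wf_nonneg)
    finally show ?thesis .
  qed
  have incs: "incseq (\<lambda>m. ennreal (s m))"
    using incF th_mono thF unfolding incseq_def by metis
  have "(\<lambda>m. ennreal (s m)) \<longlonglongrightarrow> ennreal (D - wmax a)"
    using slim by (rule tendsto_ennrealI)
  moreover have "(\<lambda>m. ennreal (s m)) \<longlonglongrightarrow> (SUP m. ennreal (s m))" using incs by (rule LIMSEQ_SUP)
  ultimately have SUPs: "(SUP m. ennreal (s m)) = ennreal (D - wmax a)" using LIMSEQ_unique by blast
  have ct: "ctail a n = {(a,\<infinity>)} \<union> (\<Union>m. F m)"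
    unfolding UF by (auto simp: ctail_def dest: enat_le_fin)
  have "th (ctail a n) = th {(a,\<infinity>)} + th (\<Union>m. F m)"
    unfolding ct by (rule th_un) (auto simp: F_def)
  also have "\<dots> = ennreal (wmax a) + ennreal (D - wmax a)"
    using th_sup[OF incF] thF SUPs by (simp add: th_fin wr_inf)
  also have "\<dots> = ennreal D" using Dw wmax(2) by (simp add: ennreal_plus[symmetric] del: ennreal_plus)
  finally have thc: "th (ctail a n) = ennreal D" .
  have "D \<ge> 0" unfolding D_def using nr_mono[OF V Z] by auto
  then have "\<nu> ?Z = \<nu> V + ennreal D"
    using nu_nr[OF Z] nu_nr[OF V] nr_nonneg[of V] unfolding D_def
    by (simp add: ennreal_plus[symmetric] del: ennreal_plus)
  then show ?thesis using thc by simp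
qed

lemma nonempty_K:
  assumes V: "jop V" and ne: "V \<noteq> {}"
  obtains K where "\<And>c. c \<ge> K \<Longrightarrow> (c,\<infinity>) \<in> V"
proof -
  obtain c0 d0 where cd: "(c0,d0) \<in> V" using ne by auto
  have "\<exists>m. (c0, enat m) \<in> V"
  proof (cases d0)
    case (enat m) then show ?thesis using cd by blast
  next
    case infinity then show ?thesis using cd jop_col[OF V] by blast
  qed
  then obtain m where m: "(c0, enat m) \<in> V" by blast
  have "(c,\<infinity>) \<in> V" if "c \<ge> m" for c using jop_max[OF V m] that by simp
  then show ?thesis using that by blast
qed

definition tails :: "nat set \<Rightarrow> nat \<Rightarrow> jpt set" where
  "tails S n = {(c,d). c \<in> S \<and> enat n \<le> d}"

lemma general:
  assumes U: "jop U" and V: "jop V" and VU: "V \<subseteq> U" and ne: "V \<noteq> {}"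
  shows "\<nu> U = \<nu> V + th (U - V)"
proof -
  obtain K where K: "\<And>c. c \<ge> K \<Longrightarrow> (c,\<infinity>) \<in> V" using nonempty_K[OF V ne] by blast
  define C where "C = {c. (c,\<infinity>) \<in> U \<and> (c,\<infinity>) \<notin> V}"
  have CK: "C \<subseteq> {..<K}" using K by (auto simp: C_def not_less[symmetric])
  then have finC: "finite C" by (rule finite_subset) simp
  have "\<forall>c\<in>C. \<exists>m. (c, enat m) \<in> U" using jop_col[OF U] by (auto simp: C_def)
  then obtain f where f: "\<And>c. c \<in> C \<Longrightarrow> (c, enat (f c)) \<in> U" by metis
  define n where "n = Max (insert K (f ` C))"
  have nK: "K \<le> n" unfolding n_def using finC by simp
  have nf: "f c \<le> n" if "c \<in> C" for c unfolding n_def using finC that by simp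
  have Cn: "c < n" if "c \<in> C" for c using CK that nK by auto
  have jT: "jop (V \<union> tails S n)" if "S \<subseteq> C" for S
  proof (rule jopI)
    fix c b d assume "(c,b) \<in> V \<union> tails S n" "b \<le> d"
    then show "(c,d) \<in> V \<union> tails S n" using jop_up[OF V] by (auto simp: tails_def)
  next
    fix c b e assume h: "(c,b) \<in> V \<union> tails S n" "b \<le> enat e"
    show "(e,\<infinity>) \<in> V \<union> tails S n"
    proof (cases "(c,b) \<in> V")
      case True then show ?thesis using jop_max[OF V] h(2) by blast
    next
      case False
      then have "enat n \<le> b" using h(1) by (auto simp: tails_def)
      then have "enat n \<le> enat e" using h(2) by (rule order_trans)
      then have "K \<le> e" using nK by simp
      then show ?thesis using K by blast
    qed
  next
    fix c assume "(c,\<infinity>) \<in> V \<union> tails S n"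
    then show "\<exists>k. (c, enat k) \<in> V \<union> tails S n" using jop_col[OF V] by (auto simp: tails_def)
  qed
  have tV: "tails C n \<inter> V = {}"
  proof (rule ccontr)
    assume "tails C n \<inter> V \<noteq> {}"
    then obtain c d where "c \<in> C" "(c,d) \<in> V" by (auto simp: tails_def)
    then have "(c,\<infinity>) \<in> V" using jop_up[OF V] by simp
    then show False using \<open>c \<in> C\<close> by (simp add: C_def)
  qed
  have ind: "\<nu> (V \<union> tails S n) = \<nu> V + th (tails S n)" if "S \<subseteq> C" for S
    using finite_subset[OF that finC] that
  proof (induction S rule: finite_induct)
    case empty then show ?case by (simp add: tails_def th_empty)
  next
    case (insert a S)
    have aC: "a \<in> C" using insert by auto
    have SC: "S \<subseteq> C" using insert by auto
    have e1: "V \<union> tails (insert a S) n = (V \<union> tails S n) \<union> ctail a n"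
      by (auto simp: tails_def ctail_def)
    have na: "(a,d) \<notin> V \<union> tails S n" for d
    proof
      assume "(a,d) \<in> V \<union> tails S n"
      moreover have "(a,d) \<notin> tails S n" using insert(2) by (simp add: tails_def)
      ultimately have "(a,d) \<in> V" by simp
      then have "(a,\<infinity>) \<in> V" using jop_up[OF V] by simp
      then show False using aC by (simp add: C_def)
    qed
    have "\<nu> (V \<union> tails (insert a S) n) = \<nu> (V \<union> tails S n) + th (ctail a n)"
      unfolding e1
      by (rule tail_lemma[OF jT[OF SC] na Cn[OF aC]]) (use jT[OF insert(4)] e1 in simp)
    also have "\<dots> = \<nu> V + (th (tails S n) + th (ctail a n))"
      using insert.IH[OF SC] by (simp add: add.assoc)
    also have "th (tails S n) + th (ctail a n) = th (tails (insert a S) n)"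
    proof -
      have "tails (insert a S) n = tails S n \<union> ctail a n" by (auto simp: tails_def ctail_def)
      moreover have "tails S n \<inter> ctail a n = {}" using insert(2) by (auto simp: tails_def ctail_def)
      ultimately show ?thesis by (simp add: th_un)
    qed
    finally show ?case .
  qed
  define V' where "V' = V \<union> tails C n"
  have V': "jop V'" unfolding V'_def by (rule jT) simp
  have nuV': "\<nu> V' = \<nu> V + th (tails C n)" unfolding V'_def by (rule ind) simp
  have V'U: "V' \<subseteq> U"
  proof
    fix x assume "x \<in> V'"
    then show "x \<in> U"
    proof (cases "x \<in> V")
      case True then show ?thesis using VU by auto
    next
      case False
      then obtain c d where x: "x = (c,d)" "c \<in> C" "enat n \<le> d" using \<open>x \<in> V'\<close> by (auto simp: V'_def tails_def)
      have "(c, enat n) \<in> U" using jop_up[OF U f[OF x(2)]] nf[OF x(2)] by simp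
      then show ?thesis using jop_up[OF U] x by blast
    qed
  qed
  have nomax: "(c,\<infinity>) \<in> V'" if "(c,\<infinity>) \<in> U" for c
  proof (cases "(c,\<infinity>) \<in> V")
    case True then show ?thesis by (simp add: V'_def)
  next
    case False
    then have "c \<in> C" using that by (simp add: C_def)
    then show ?thesis by (simp add: V'_def tails_def)
  qed
  define W where "W j = V' \<union> {y \<in> U. fst y < j}" for j
  have jW: "jop (W j)" for j
  proof (rule jopI)
    fix c b d assume "(c,b) \<in> W j" "b \<le> d"
    then show "(c,d) \<in> W j" using jop_up[OF V'] jop_up[OF U] by (auto simp: W_def)
  next
    fix c b e assume h: "(c,b) \<in> W j" "b \<le> enat e"
    then have "(c,b) \<in> U" using V'U by (auto simp: W_def)
    then have "(e,\<infinity>) \<in> U" using jop_max[OF U] h(2) by blast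
    then show "(e,\<infinity>) \<in> W j" using nomax by (simp add: W_def)
  next
    fix c assume "(c,\<infinity>) \<in> W j"
    then show "\<exists>k. (c, enat k) \<in> W j" using jop_col[OF V'] jop_col[OF U] by (auto simp: W_def)
  qed
  define h where "h c = (SOME m. (c, enat m) \<in> V')" for c
  have finW: "finite (W j - V')" for j
  proof -
    have "W j - V' \<subseteq> (\<Union>c\<in>{..<j}. (\<lambda>k. (c, enat k)) ` {..<h c})"
    proof
      fix x assume x: "x \<in> W j - V'"
      obtain c d where xcd: "x = (c,d)" by (cases x)
      have cj: "c < j" and cdU: "(c,d) \<in> U" and cdV: "(c,d) \<notin> V'" using x xcd by (auto simp: W_def)
      have "(c,\<infinity>) \<in> U" using jop_up[OF U cdU] by simp
      then have "(c,\<infinity>) \<in> V'" by (rule nomax)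
      then have "\<exists>m. (c, enat m) \<in> V'" by (rule jop_col[OF V'])
      then have hc: "(c, enat (h c)) \<in> V'" unfolding h_def by (rule someI_ex)
      have "d \<noteq> \<infinity>"
      proof
        assume "d = \<infinity>"
        then show False using cdV \<open>(c,\<infinity>) \<in> V'\<close> by simp
      qed
      then obtain k where k: "d = enat k" by auto
      have "k < h c"
      proof (rule ccontr)
        assume "\<not> k < h c"
        then have "enat (h c) \<le> d" using k by simp
        then have "(c,d) \<in> V'" using jop_up[OF V' hc] by simp
        then show False using cdV by simp
      qed
      then show "x \<in> (\<Union>c\<in>{..<j}. (\<lambda>k. (c, enat k)) ` {..<h c})" using xcd k cj by auto
    qed
    then show ?thesis by (rule finite_subset) auto
  qed
  have nuW: "\<nu> (W j) = \<nu> V' + th (W j - V')" for j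
  proof -
    have fp: "\<forall>x\<in>W j - V'. snd x \<noteq> \<infinity>"
    proof
      fix x assume x: "x \<in> W j - V'"
      obtain c d where xcd: "x = (c,d)" by (cases x)
      show "snd x \<noteq> \<infinity>"
      proof
        assume "snd x = \<infinity>"
        then have "(c,\<infinity>) \<in> U" "(c,\<infinity>) \<notin> V'" using x xcd V'U by (auto simp: W_def)
        then show False using nomax by blast
      qed
    qed
    have sub: "V' \<subseteq> W j" by (auto simp: W_def)
    have s1: "nr (W j) = nr V' + (\<Sum>x\<in>W j - V'. wfp x)"
      by (rule step1[OF jW V' sub finW fp])
    have "th (W j - V') = (\<Sum>x\<in>W j - V'. ennreal (wr x))" by (rule th_fin[OF finW])
    also have "\<dots> = (\<Sum>x\<in>W j - V'. ennreal (wfp x))"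
    proof (rule sum.cong)
      fix x assume "x \<in> W j - V'"
      then have "snd x \<noteq> \<infinity>" using fp by blast
      then obtain k where "snd x = enat k" by auto
      then have "x = (fst x, enat k)" by (metis prod.collapse)
      then show "ennreal (wr x) = ennreal (wfp x)" by (metis wr_fin wfp_def fst_conv snd_conv the_enat.simps)
    qed simp
    also have "\<dots> = ennreal (\<Sum>x\<in>W j - V'. wfp x)" by (simp add: wfp_nonneg)
    finally have "th (W j - V') = ennreal (\<Sum>x\<in>W j - V'. wfp x)" .
    then show ?thesis using s1 nu_nr[OF jW] nu_nr[OF V'] nr_nonneg[of V']
      by (simp add: ennreal_plus[symmetric] sum_nonneg wfp_nonneg del: ennreal_plus)
  qed
  have UW: "(\<Union>j. W j) = U"
  proof
    show "(\<Union>j. W j) \<subseteq> U" using V'U by (auto simp: W_def)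
    show "U \<subseteq> (\<Union>j. W j)"
    proof
      fix y assume "y \<in> U"
      then have "y \<in> W (Suc (fst y))" by (simp add: W_def)
      then show "y \<in> (\<Union>j. W j)" by blast
    qed
  qed
  have incW: "incseq W" unfolding incseq_def W_def by auto
  have cont: "\<nu> U = (SUP j. \<nu> (W j))"
  proof -
    have "\<nu> (\<Union>(range W)) = (SUP U\<in>range W. \<nu> U)"
    proof -
      have dir: "\<forall>A\<in>range W. \<forall>B\<in>range W. \<exists>C\<in>range W. A \<subseteq> C \<and> B \<subseteq> C"
      proof (intro ballI)
        fix A B assume "A \<in> range W" "B \<in> range W"
        then obtain i j where "A = W i" "B = W j" by auto
        then show "\<exists>C\<in>range W. A \<subseteq> C \<and> B \<subseteq> C"
          using incW by (intro bexI[of _ "W (max i j)"]) (auto simp: incseq_def)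
      qed
      have op: "\<forall>A\<in>range W. scott_open A" using jW by (auto simp: scott_open_iff)
      show ?thesis using cv dir op unfolding continuous_valuation_def by blast
    qed
    then show ?thesis using UW by (simp add: image_image)
  qed
  have incD: "incseq (\<lambda>j. W j - V')" using incW unfolding incseq_def by auto
  have UD: "(\<Union>j. W j - V') = U - V'" using UW by auto
  have "\<nu> U = (SUP j. \<nu> V' + th (W j - V'))" using cont nuW by simp
  also have "\<dots> = \<nu> V' + (SUP j. th (W j - V'))" by (simp add: ennreal_SUP_add_right)
  also have "(SUP j. th (W j - V')) = th (U - V')" using th_sup[OF incD] UD by simp
  finally have A: "\<nu> U = \<nu> V' + th (U - V')" .
  have split: "U - V = tails C n \<union> (U - V')" "tails C n \<inter> (U - V') = {}"
    using V'U tV by (auto simp: V'_def)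
  have "th (U - V) = th (tails C n) + th (U - V')" using split by (simp add: th_un)
  then show ?thesis using A nuV' by (simp add: add.assoc)
qed

definition T :: "nat \<Rightarrow> jpt set" where
  "T k = {(c,d). c \<ge> k \<and> enat k \<le> d}"

lemma jop_T: "jop (T k)"
proof (rule jopI)
  fix c b d assume "(c,b) \<in> T k" "b \<le> d"
  then show "(c,d) \<in> T k" by (auto simp: T_def)
next
  fix c b e assume h: "(c,b) \<in> T k" "b \<le> enat e"
  then have "enat k \<le> b" by (auto simp: T_def)
  then have "enat k \<le> enat e" using h(2) by (rule order_trans)
  then show "(e,\<infinity>) \<in> T k" by (simp add: T_def)
next
  fix c assume "(c,\<infinity>) \<in> T k"
  then have "(c, enat k) \<in> T k" by (simp add: T_def)
  then show "\<exists>m. (c, enat m) \<in> T k" by blast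
qed

lemma th_UNIV: "th UNIV \<le> \<nu> UNIV"
proof -
  have inc: "incseq (\<lambda>k. UNIV - T k)" unfolding incseq_def T_def
    by auto (metis enat_ord_simps(1) order_trans)
  have un: "(\<Union>k. UNIV - T k) = UNIV"
  proof -
    have "x \<in> UNIV - T (Suc (fst x))" for x by (auto simp: T_def)
    then show ?thesis by blast
  qed
  have "th (UNIV - T k) \<le> \<nu> UNIV" for k
  proof -
    have "(k,\<infinity>) \<in> T k" by (simp add: T_def)
    then have ne: "T k \<noteq> {}" by blast
    have "\<nu> UNIV = \<nu> (T k) + th (UNIV - T k)" by (rule general[OF jop_UNIV jop_T _ ne]) simp
    then show ?thesis by simp
  qed
  then have "(SUP k. th (UNIV - T k)) \<le> \<nu> UNIV" by (simp add: SUP_le_iff)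
  then show ?thesis using th_sup[OF inc] un by simp
qed

definition rr :: real where "rr = nr UNIV - enn2real (th UNIV)"

lemma th_fin_all: "th S < \<infinity>"
proof -
  have "th S \<le> th UNIV" by (rule th_mono) simp
  also have "\<dots> \<le> \<nu> UNIV" by (rule th_UNIV)
  also have "\<dots> < \<infinity>" by (rule nu_fin[OF jop_UNIV])
  finally show ?thesis .
qed

lemma rr_nonneg: "rr \<ge> 0"
  unfolding rr_def nr_def using th_UNIV nu_fin[OF jop_UNIV] by (simp add: enn2real_mono)

lemma decomp: assumes U: "jop U" and ne: "U \<noteq> {}" shows "\<nu> U = th U + ennreal rr"
proof -
  have "\<nu> UNIV = \<nu> U + th (UNIV - U)" by (rule general[OF jop_UNIV U _ ne]) simp
  then have a: "nr UNIV = nr U + enn2real (th (UNIV - U))"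
    unfolding nr_def using nu_fin[OF U] th_fin_all by (simp add: enn2real_plus)
  have "th UNIV = th U + th (UNIV - U)" using th_un[of U "UNIV - U"] by simp
  then have b: "enn2real (th UNIV) = enn2real (th U) + enn2real (th (UNIV - U))"
    using th_fin_all by (simp add: enn2real_plus)
  have "nr U = enn2real (th U) + rr" using a b unfolding rr_def by simp
  then have "\<nu> U = ennreal (enn2real (th U) + rr)" using nu_nr[OF U] by simp
  also have "\<dots> = th U + ennreal rr"
    using rr_nonneg th_fin_all[of U] by (simp add: ennreal_plus ennreal_enn2real_if)
  finally show ?thesis .
qed

lemma dirac_eq: "dirac y U = indicator U y"
  by (cases "y \<in> U") (simp_all add: dirac_def)

lemma th_discrete: "discrete_valuation th"
proof -
  define x where "x = from_nat_into (UNIV :: jpt set)"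
  have inf: "infinite (UNIV :: jpt set)" by (simp add: finite_prod)
  have bij: "bij_betw x UNIV UNIV" unfolding x_def
    by (rule bij_betw_from_nat_into[OF countableI_type inf])
  have "th U = (\<Sum>i. ennreal (wr (x i)) * dirac (x i) U)" for U
  proof -
    have "th U = (\<integral>\<^sup>+y. ennreal (wr y) * indicator U y \<partial>count_space UNIV)" by (rule th_nn)
    also have "\<dots> = (\<integral>\<^sup>+i. ennreal (wr (x i)) * indicator U (x i) \<partial>count_space UNIV)"
      using nn_integral_bij_count_space[OF bij, of "\<lambda>y. ennreal (wr y) * indicator U y"] by (rule sym)
    also have "\<dots> = (\<Sum>i. ennreal (wr (x i)) * indicator U (x i))" by (rule nn_integral_count_space_nat)
    finally show ?thesis by (simp only: dirac_eq)
  qed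
  then show ?thesis unfolding discrete_valuation_def
    by (intro exI[of _ "\<lambda>i. wr (x i)"] exI[of _ x]) (simp add: wr_nonneg)
qed

lemma main: "point_continuous \<nu> \<and>
    (\<exists>\<theta> (r::real). discrete_valuation \<theta> \<and> 0 \<le> r \<and>
       (\<forall>U. scott_open U \<longrightarrow> \<nu> U = \<theta> U + ennreal r * mu_J U))"
proof
  show "\<exists>\<theta> (r::real). discrete_valuation \<theta> \<and> 0 \<le> r \<and>
       (\<forall>U. scott_open U \<longrightarrow> \<nu> U = \<theta> U + ennreal r * mu_J U)"
  proof (intro exI conjI allI impI)
    show "discrete_valuation th" by (rule th_discrete)
    show "0 \<le> rr" by (rule rr_nonneg)
    fix U assume "scott_open U"
    then have U: "jop U" by (simp add: scott_open_iff)
    show "\<nu> U = th U + ennreal rr * mu_J U"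
    proof (cases "U = {}")
      case True then show ?thesis by (simp add: nu_empty th_empty mu_J_def)
    next
      case False then show ?thesis using decomp[OF U False] by (simp add: mu_J_def)
    qed
  qed
  show "point_continuous \<nu>"
    unfolding point_continuous_def
  proof (intro allI impI)
    fix U and r0 :: real assume h: "scott_open U \<and> 0 \<le> r0 \<and> ennreal r0 < \<nu> U"
    then have U: "jop U" by (simp add: scott_open_iff)
    have ne: "U \<noteq> {}" using h nu_empty by auto
    then obtain x0 where x0: "x0 \<in> U" by auto
    define G where "G n = U \<inter> ({..<n} \<times> insert \<infinity> (enat ` {..<n}))" for n
    have finG: "finite (G n)" for n unfolding G_def by auto
    have incG: "incseq G" unfolding incseq_def G_def by auto
    have UG: "(\<Union>n. G n) = U"
    proof
      show "(\<Union>n. G n) \<subseteq> U" by (auto simp: G_def)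
      show "U \<subseteq> (\<Union>n. G n)"
      proof
        fix y assume y: "y \<in> U"
        obtain c d where ycd: "y = (c,d)" by (cases y)
        have "y \<in> G (Suc (c + (case d of enat k \<Rightarrow> k | \<infinity> \<Rightarrow> 0)))"
          using y ycd by (cases d) (auto simp: G_def)
        then show "y \<in> (\<Union>n. G n)" by blast
      qed
    qed
    have "ennreal r0 < th U + ennreal rr" using h decomp[OF U ne] by simp
    also have "th U + ennreal rr = (SUP n. th (G n) + ennreal rr)"
      using th_sup[OF incG] UG by (simp add: ennreal_SUP_add_left)
    finally obtain n where n: "ennreal r0 < th (G n) + ennreal rr" by (auto simp: less_SUP_iff)
    show "\<exists>A. finite A \<and> A \<subseteq> U \<and> (\<forall>V. scott_open V \<and> A \<subseteq> V \<longrightarrow> ennreal r0 < \<nu> V)"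
    proof (intro exI conjI allI impI)
      show "finite (insert x0 (G n))" using finG by simp
      show "insert x0 (G n) \<subseteq> U" using x0 by (auto simp: G_def)
      fix V assume hv: "scott_open V \<and> insert x0 (G n) \<subseteq> V"
      then have V: "jop V" and neV: "V \<noteq> {}" and GV: "G n \<subseteq> V" by (auto simp: scott_open_iff)
      have "th (G n) \<le> th V" by (rule th_mono[OF GV])
      then have "th (G n) + ennreal rr \<le> \<nu> V" using decomp[OF V neV] by simp
      then show "ennreal r0 < \<nu> V" using n by simp
    qed
  qed
qed

end

theorem theorem3p4:
  fixes \<nu> :: "jpt set \<Rightarrow> ennreal"
  assumes "continuous_valuation \<nu>" and "bounded_valuation \<nu>"
  shows "point_continuous \<nu> \<and>
    (\<exists>\<theta> (r::real). discrete_valuation \<theta> \<and> 0 \<le> r \<and>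
       (\<forall>U. scott_open U \<longrightarrow> \<nu> U = \<theta> U + ennreal r * mu_J U))"
  by (rule main[OF assms])

end
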